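(* Let $A=\{0,1,2\}$ and let $T\colon A^4\to A$ be given by $T(1,1,2,2)=T(1,2,1,2)=1$ and $T(\mathbf{x})=0$ for all other $\mathbf{x}\in A^4$. Let $g\in\{T\}^{*(1)*(2)}$. Then: (a) if $g(1,2)=2$ then $g(0,a)=a$ for all $a\in A$; (b) if $g(2,1)=2$ then $g(a,0)=a$ for all $a\in A$; (c) if $g(1,2)\in\{0,1\}$ then $g(0,a)=0$ for all $a\in A$; (d) if $g(2,1)\in\{0,1\}$ then $g(a,0)=0$ for all $a\in A$.
   Context: An $m$-ary $g$ commutes with an $n$-ary $h$ if $g\bigl((h((x_{ij})_{j}))_{i}\bigr)=h\bigl((g((x_{ij})_{i}))_{j}\bigr)$ for all $(x_{ij})\in A^{m\times n}$. For a set $F$ of finitary operations on $A$ (positive arity), $F^*$ is the set of all such operations commuting with every member of $F$, and $F^{(n)}$ is the set of $n$-ary members of $F$; superscripts apply from left to right, so $\{T\}^{*(1)*(2)}=(((\{T\}^* )^{(1)})^* )^{(2)}$. *)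

theory Defs
  imports Main
begin

text \<open>An operation is a pair
  (n, f) of its arity n and a function f on argument lists; only the values of f
  on lists of length n with entries in A matter.\<close>

type_synonym operation = "nat \<times> (nat list \<Rightarrow> nat)"

definition is_op :: "nat set \<Rightarrow> nat \<Rightarrow> (nat list \<Rightarrow> nat) \<Rightarrow> bool" where
  "is_op A n f \<longleftrightarrow> (\<forall>xs. length xs = n \<and> set xs \<subseteq> A \<longrightarrow> f xs \<in> A)"

definition commutes :: "nat set \<Rightarrow> nat \<Rightarrow> (nat list \<Rightarrow> nat) \<Rightarrow> nat \<Rightarrow> (nat list \<Rightarrow> nat) \<Rightarrow> bool" where
  "commutes A m g n h \<longleftrightarrow>
     (\<forall>x :: nat \<Rightarrow> nat \<Rightarrow> nat. (\<forall>i<m. \<forall>j<n. x i j \<in> A) \<longrightarrow>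
        g (map (\<lambda>i. h (map (\<lambda>j. x i j) [0..<n])) [0..<m])
      = h (map (\<lambda>j. g (map (\<lambda>i. x i j) [0..<m])) [0..<n]))"

definition centralizer :: "nat set \<Rightarrow> operation set \<Rightarrow> operation set" where
  "centralizer A F = {(m, g). 0 < m \<and> is_op A m g \<and> (\<forall>(n, h)\<in>F. commutes A m g n h)}"

definition arity_part :: "operation set \<Rightarrow> nat \<Rightarrow> operation set" where
  "arity_part F n = {(m, g) \<in> F. m = n}"

definition A3 :: "nat set" where "A3 = {0, 1, 2}"

definition Top :: "nat list \<Rightarrow> nat" where
  "Top xs = (if xs = [1,1,2,2] \<or> xs = [1,2,1,2] then 1 else 0)"

end

theory Submission
  imports Defs
begin

definition ec :: "nat \<Rightarrow> nat list \<Rightarrow> nat" where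
  "ec c xs = (if hd xs = 2 then c else 0)"

lemma ec_in:
  assumes "c \<in> A3"
  shows "(1, ec c) \<in> arity_part (centralizer A3 {(4, Top)}) 1"
proof -
  have op: "is_op A3 1 (ec c)" using assms unfolding is_op_def ec_def A3_def by auto
  have "commutes A3 1 (ec c) 4 Top"
    unfolding commutes_def
  proof (intro allI impI)
    fix x :: "nat \<Rightarrow> nat \<Rightarrow> nat"
    have l: "ec c [Top xs] = 0" for xs unfolding ec_def Top_def by auto
    have r: "Top [ec c [a], ec c [b], ec c [d], ec c [e]] = 0" for a b d e
      unfolding ec_def Top_def by auto
    show "ec c (map (\<lambda>i. Top (map (x i) [0..<4])) [0..<1]) =
          Top (map (\<lambda>j. ec c (map (\<lambda>i. x i j) [0..<1])) [0..<4])"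
      by (simp add: upt_rec l r)
  qed
  then show ?thesis using op unfolding arity_part_def centralizer_def by auto
qed

lemma key:
  assumes "(2, g) \<in> arity_part (centralizer A3 (arity_part (centralizer A3 {(4, Top)}) 1)) 2"
    and "c \<in> A3" and "a \<in> A3" and "b \<in> A3"
  shows "g [ec c [a], ec c [b]] = ec c [g [a, b]]"
proof -
  have "commutes A3 2 g 1 (ec c)"
    using assms(1) ec_in[OF assms(2)] unfolding arity_part_def centralizer_def by fastforce
  then have "\<forall>x :: nat \<Rightarrow> nat \<Rightarrow> nat. (\<forall>i<2. \<forall>j<1. x i j \<in> A3) \<longrightarrow>
        g (map (\<lambda>i. ec c (map (\<lambda>j. x i j) [0..<1])) [0..<2])
      = ec c (map (\<lambda>j. g (map (\<lambda>i. x i j) [0..<2])) [0..<1])"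
    unfolding commutes_def by blast
  from spec[OF this, of "\<lambda>i j. if i = 0 then a else b"] assms(3,4)
  show ?thesis by (simp add: upt_rec less_2_cases_iff)
qed

theorem lemma3p9:
  fixes g :: "nat list \<Rightarrow> nat"
  assumes "(2, g) \<in> arity_part (centralizer A3 (arity_part (centralizer A3 {(4, Top)}) 1)) 2"
  shows "(g [1,2] = 2 \<longrightarrow> (\<forall>a\<in>A3. g [0,a] = a))
       \<and> (g [2,1] = 2 \<longrightarrow> (\<forall>a\<in>A3. g [a,0] = a))
       \<and> (g [1,2] \<in> {0,1} \<longrightarrow> (\<forall>a\<in>A3. g [0,a] = 0))
       \<and> (g [2,1] \<in> {0,1} \<longrightarrow> (\<forall>a\<in>A3. g [a,0] = 0))"
proof -
  have A: "1 \<in> A3" "2 \<in> A3" unfolding A3_def by auto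
  have k1: "g [0, c] = ec c [g [1, 2]]" if "c \<in> A3" for c
    using key[OF assms that A] by (simp add: ec_def)
  have k2: "g [c, 0] = ec c [g [2, 1]]" if "c \<in> A3" for c
    using key[OF assms that A(2) A(1)] by (simp add: ec_def)
  show ?thesis using k1 k2 by (auto simp: ec_def)
qed

end
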